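(* Let $(G,\cdot)$ be a loop with identity $e$ and let $(H,\cdot)$ be a non-trivial subloop of $G$ such that $(xs\cdot z)s=x(sz\cdot s)$ for all $x,z\in G$ and $s\in H$. Then $$xs^m\cdot s^n=xs^{m+n}$$ for all $x\in G$, $s\in H$ and $m,n\in\mathbb{Z}$.
   Context: Juxtaposition binds more tightly than $\cdot$. For $s\in H$, the left and right inverses of $s$ coincide under the hypothesis; denote this common inverse by $s^{-1}$. Powers of $s\in H$ are defined by $s^0=e$, $s^n=s^{n-1}\cdot s$ for $n>0$, and $s^n=(s^{-1})^{|n|}$ for $n<0$. *)

theory Defs
  imports Main
begin

definition loop :: "'a set \<Rightarrow> ('a \<Rightarrow> 'a \<Rightarrow> 'a) \<Rightarrow> 'a \<Rightarrow> bool" where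
  "loop G mul e \<longleftrightarrow>
     (\<forall>x\<in>G. \<forall>y\<in>G. mul x y \<in> G) \<and>
     e \<in> G \<and>
     (\<forall>x\<in>G. mul e x = x \<and> mul x e = x) \<and>
     (\<forall>a\<in>G. \<forall>b\<in>G. \<exists>!x. x \<in> G \<and> mul a x = b) \<and>
     (\<forall>a\<in>G. \<forall>b\<in>G. \<exists>!y. y \<in> G \<and> mul y a = b)"

text \<open>A subloop: a subset that is a loop under the restricted operation
(its identity is necessarily the identity of the ambient loop).\<close>
definition subloop :: "'a set \<Rightarrow> 'a set \<Rightarrow> ('a \<Rightarrow> 'a \<Rightarrow> 'a) \<Rightarrow> 'a \<Rightarrow> bool" where
  "subloop H G mul e \<longleftrightarrow> H \<subseteq> G \<and> loop H mul e"

text \<open>Inverse of s: the (unique) right inverse in G; under the hypothesis of the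
theorem it coincides with the left inverse.\<close>
definition linv :: "'a set \<Rightarrow> ('a \<Rightarrow> 'a \<Rightarrow> 'a) \<Rightarrow> 'a \<Rightarrow> 'a \<Rightarrow> 'a" where
  "linv G mul e s = (THE y. y \<in> G \<and> mul s y = e)"

fun npow :: "('a \<Rightarrow> 'a \<Rightarrow> 'a) \<Rightarrow> 'a \<Rightarrow> 'a \<Rightarrow> nat \<Rightarrow> 'a" where
  "npow mul e s 0 = e"
| "npow mul e s (Suc n) = mul (npow mul e s n) s"

definition zpow :: "'a set \<Rightarrow> ('a \<Rightarrow> 'a \<Rightarrow> 'a) \<Rightarrow> 'a \<Rightarrow> 'a \<Rightarrow> int \<Rightarrow> 'a" where
  "zpow G mul e s n =
     (if n \<ge> 0 then npow mul e s (nat n) else npow mul e (linv G mul e s) (nat (- n)))"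

end

theory Submission
  imports Defs
begin

lemma loop_facts:
  assumes "loop G mul e"
  shows "\<And>x y. x\<in>G \<Longrightarrow> y\<in>G \<Longrightarrow> mul x y \<in> G"
    and "e \<in> G"
    and "\<And>x. x\<in>G \<Longrightarrow> mul e x = x"
    and "\<And>x. x\<in>G \<Longrightarrow> mul x e = x"
    and "\<And>a y1 y2. a\<in>G \<Longrightarrow> y1\<in>G \<Longrightarrow> y2\<in>G \<Longrightarrow> mul y1 a = mul y2 a \<Longrightarrow> y1 = y2"
    and "\<And>a b. a\<in>G \<Longrightarrow> b\<in>G \<Longrightarrow> \<exists>y\<in>G. mul y a = b"
    and "\<And>a b. a\<in>G \<Longrightarrow> b\<in>G \<Longrightarrow> \<exists>!x. x \<in> G \<and> mul a x = b"
proof -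
  have C: "\<forall>x\<in>G. \<forall>y\<in>G. mul x y \<in> G" and E: "e \<in> G" and I: "\<forall>x\<in>G. mul e x = x \<and> mul x e = x"
    and U1: "\<forall>a\<in>G. \<forall>b\<in>G. \<exists>!x. x \<in> G \<and> mul a x = b"
    and U2: "\<forall>a\<in>G. \<forall>b\<in>G. \<exists>!y. y \<in> G \<and> mul y a = b"
    using assms unfolding loop_def by simp_all
  show "\<And>x y. x\<in>G \<Longrightarrow> y\<in>G \<Longrightarrow> mul x y \<in> G" using C by simp
  show "e \<in> G" by (rule E)
  show "\<And>x. x\<in>G \<Longrightarrow> mul e x = x" using I by simp
  show "\<And>x. x\<in>G \<Longrightarrow> mul x e = x" using I by simp
  show "\<And>a b. a\<in>G \<Longrightarrow> b\<in>G \<Longrightarrow> \<exists>!x. x \<in> G \<and> mul a x = b" using U1 by simp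
  show "\<And>a b. a\<in>G \<Longrightarrow> b\<in>G \<Longrightarrow> \<exists>y\<in>G. mul y a = b"
  proof -
    fix a b assume "a\<in>G" "b\<in>G"
    then have "\<exists>!y. y \<in> G \<and> mul y a = b" using U2 by simp
    then show "\<exists>y\<in>G. mul y a = b" by (metis)
  qed
  show "\<And>a y1 y2. a\<in>G \<Longrightarrow> y1\<in>G \<Longrightarrow> y2\<in>G \<Longrightarrow> mul y1 a = mul y2 a \<Longrightarrow> y1 = y2"
  proof -
    fix a y1 y2 assume h: "a\<in>G" "y1\<in>G" "y2\<in>G" "mul y1 a = mul y2 a"
    have "mul y1 a \<in> G" using C h by simp
    then have "\<exists>!y. y \<in> G \<and> mul y a = mul y1 a" using U2 h by simp
    then show "y1 = y2" using h by metis
  qed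
qed

lemma npow_in:
  assumes "loop G mul e" "t \<in> G" shows "npow mul e t k \<in> G"
  using assms loop_facts(1,2)[OF assms(1)] by (induction k) auto

lemma npow_R:
  assumes L: "loop G mul e" and tG: "t \<in> G"
    and B: "\<forall>x\<in>G. \<forall>z\<in>G. mul (mul (mul x t) z) t = mul x (mul (mul t z) t)"
  shows "\<forall>x\<in>G. mul x (npow mul e t k) = ((\<lambda>y. mul y t)^^k) x"
proof (induction k rule: less_induct)
  case (less k)
  note F = loop_facts[OF L]
  define R where "R = (\<lambda>y. mul y t)"
  have RG: "\<And>j x. x \<in> G \<Longrightarrow> (R^^j) x \<in> G"
  proof -
    fix j x assume "x \<in> G" thus "(R^^j) x \<in> G" by (induction j) (auto simp: R_def F(1) tG)
  qed
  have Re: "\<And>j. (R^^j) e = npow mul e t j"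
  proof -
    fix j show "(R^^j) e = npow mul e t j" by (induction j) (auto simp: R_def)
  qed
  show ?case
  proof (cases k)
    case 0 then show ?thesis using F(4) by simp
  next
    case (Suc k1)
    show ?thesis
    proof (cases k1)
      case 0 then show ?thesis using Suc F(3) tG by simp
    next
      case (Suc j)
      have IHj: "\<forall>x\<in>G. mul x (npow mul e t j) = (R^^j) x" using less Suc \<open>k = Suc k1\<close> R_def by auto
      have pjG: "npow mul e t j \<in> G" using npow_in[OF L tG] .
      have "mul t (npow mul e t j) = (R^^j) t" using IHj tG by blast
      also have "\<dots> = (R^^j) (R e)" using F(3) tG by (simp add: R_def)
      also have "\<dots> = (R^^(Suc j)) e" by (simp add: funpow_Suc_right del: funpow.simps)
      also have "\<dots> = npow mul e t (Suc j)" by (rule Re)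
      finally have st: "mul t (npow mul e t j) = npow mul e t (Suc j)" .
      have "npow mul e t k = mul (mul t (npow mul e t j)) t"
        using st \<open>k = Suc k1\<close> Suc by simp
      have "\<forall>x\<in>G. mul x (npow mul e t k) = R ((R^^j) (R x))"
      proof
        fix x assume xG: "x \<in> G"
        have "mul x (npow mul e t k) = mul (mul (mul x t) (npow mul e t j)) t"
          using B pjG xG \<open>npow mul e t k = _\<close> by simp
        also have "\<dots> = R ((R^^j) (R x))" using IHj F(1) tG xG by (simp add: R_def)
        finally show "mul x (npow mul e t k) = R ((R^^j) (R x))" .
      qed
      then have "\<forall>x\<in>G. mul x (npow mul e t k) = (R^^k) x"
        using \<open>k = Suc k1\<close> Suc by (simp add: funpow_Suc_right funpow_swap1 del: funpow.simps)
      then show ?thesis by (simp add: R_def)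
    qed
  qed
qed

lemma linv_props:
  assumes L: "loop G mul e" and S: "subloop H G mul e" and tH: "t \<in> H"
  shows "linv G mul e t \<in> H" "linv G mul e t \<in> G" "mul t (linv G mul e t) = e"
proof -
  have HG: "H \<subseteq> G" and LH: "loop H mul e" using S unfolding subloop_def by auto
  note FH = loop_facts[OF LH]
  note F = loop_facts[OF L]
  have tG: "t \<in> G" using tH HG by auto
  obtain y where y: "y \<in> H" "mul t y = e" using FH(7)[OF tH FH(2)] by blast
  have u: "\<exists>!x. x \<in> G \<and> mul t x = e" using F(7)[OF tG F(2)] .
  have yG: "y \<in> G" using y(1) HG by auto
  have "linv G mul e t = y" unfolding linv_def
  proof (rule the1_equality[OF u])
    show "y \<in> G \<and> mul t y = e" using yG y(2) by simp
  qed
  then show "linv G mul e t \<in> H" "linv G mul e t \<in> G" "mul t (linv G mul e t) = e"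
    using y HG by auto
qed

theorem theorem3p3:
  fixes G H :: "'a set" and mul :: "'a \<Rightarrow> 'a \<Rightarrow> 'a" and e :: 'a
  assumes "loop G mul e"
    and "subloop H G mul e"
    and "H \<noteq> {e}"
    and "\<forall>x\<in>G. \<forall>z\<in>G. \<forall>s\<in>H. mul (mul (mul x s) z) s = mul x (mul (mul s z) s)"
  shows "\<forall>x\<in>G. \<forall>s\<in>H. \<forall>m n :: int.
           mul (mul x (zpow G mul e s m)) (zpow G mul e s n) = mul x (zpow G mul e s (m + n))"
proof (intro ballI allI)
  fix x s and m n :: int
  assume xG: "x \<in> G" and sH: "s \<in> H"
  note L = assms(1)
  note F = loop_facts[OF L]
  have HG: "H \<subseteq> G" using assms(2) unfolding subloop_def by auto
  have sG: "s \<in> G" using sH HG by auto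
  define s' where "s' = linv G mul e s"
  have s'H: "s' \<in> H" and s'G: "s' \<in> G" and ss': "mul s s' = e"
    using linv_props[OF L assms(2) sH] s'_def by auto
  have Bs: "\<forall>x\<in>G. \<forall>z\<in>G. mul (mul (mul x s) z) s = mul x (mul (mul s z) s)"
    using assms(4) sH by blast
  have Bs': "\<forall>x\<in>G. \<forall>z\<in>G. mul (mul (mul x s') z) s' = mul x (mul (mul s' z) s')"
    using assms(4) s'H by blast
  define R where "R = (\<lambda>y. mul y s)"
  define R' where "R' = (\<lambda>y. mul y s')"
  have RG: "\<And>y. y \<in> G \<Longrightarrow> R y \<in> G" unfolding R_def using F(1) sG by blast
  have R'G: "\<And>y. y \<in> G \<Longrightarrow> R' y \<in> G" unfolding R'_def using F(1) s'G by blast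
  have RR': "\<And>y. y \<in> G \<Longrightarrow> R' (R y) = y"
  proof -
    fix y assume yG: "y \<in> G"
    have "mul (mul (mul y s) s') s = mul y (mul (mul s s') s)" using Bs yG s'G by blast
    also have "\<dots> = mul y s" using ss' F(3) sG by simp
    finally have "mul (mul (mul y s) s') s = mul y s" .
    then have "mul (mul y s) s' = y" using F(5)[OF sG _ yG] F(1) yG sG s'G by blast
    then show "R' (R y) = y" by (simp add: R_def R'_def)
  qed
  have R'R: "\<And>y. y \<in> G \<Longrightarrow> R (R' y) = y"
  proof -
    fix y assume yG: "y \<in> G"
    obtain w where w: "w \<in> G" "mul w s = y" using F(6)[OF sG yG] by blast
    have "R' y = w" using RR'[OF w(1)] w(2) by (simp add: R_def)
    then show "R (R' y) = y" using w(2) by (simp add: R_def)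
  qed
  have RnG: "\<And>j y. y \<in> G \<Longrightarrow> (R^^j) y \<in> G"
  proof -
    fix j y assume "y \<in> G" thus "(R^^j) y \<in> G" by (induction j) (auto intro: RG)
  qed
  have R'nG: "\<And>j y. y \<in> G \<Longrightarrow> (R'^^j) y \<in> G"
  proof -
    fix j y assume "y \<in> G" thus "(R'^^j) y \<in> G" by (induction j) (auto intro: R'G)
  qed
  define P where "P = (\<lambda>(k::int) y. if k \<ge> 0 then (R^^nat k) y else (R'^^nat (-k)) y)"
  have PG: "\<And>k y. y \<in> G \<Longrightarrow> P k y \<in> G" unfolding P_def using RnG R'nG by simp
  have zp: "\<And>k y. y \<in> G \<Longrightarrow> mul y (zpow G mul e s k) = P k y"
  proof -
    fix k y assume yG: "y \<in> G"
    have a: "\<forall>x\<in>G. mul x (npow mul e s j) = (R^^j) x" for j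
      using npow_R[OF L sG Bs] R_def by simp
    have b: "\<forall>x\<in>G. mul x (npow mul e s' j) = (R'^^j) x" for j
      using npow_R[OF L s'G Bs'] R'_def by simp
    show "mul y (zpow G mul e s k) = P k y"
      unfolding zpow_def P_def s'_def[symmetric] using a b yG by simp
  qed
  have zG: "\<And>k. zpow G mul e s k \<in> G"
    unfolding zpow_def using npow_in[OF L sG] npow_in[OF L s'G] s'_def by simp
  have Pup: "\<And>k y. y \<in> G \<Longrightarrow> P (k+1) y = R (P k y)"
  proof -
    fix k :: int and y assume yG: "y \<in> G"
    show "P (k+1) y = R (P k y)"
    proof (cases "k \<ge> 0")
      case True
      then have "nat (k+1) = Suc (nat k)" by simp
      then show ?thesis using True by (simp add: P_def)
    next
      case False
      then have e1: "nat (-k) = Suc (nat (-(k+1)))" by simp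
      have "R ((R'^^nat (-k)) y) = (R'^^nat (-(k+1))) y"
        unfolding e1 using R'R R'nG yG by simp
      then show ?thesis using False by (simp add: P_def)
    qed
  qed
  have Pdown: "\<And>k y. y \<in> G \<Longrightarrow> P (k-1) y = R' (P k y)"
  proof -
    fix k :: int and y assume yG: "y \<in> G"
    have "P k y = R (P (k-1) y)" using Pup[OF yG, of "k-1"] by simp
    then show "P (k-1) y = R' (P k y)" using RR' PG yG by simp
  qed
  have main: "P n (P m x) = P (m+n) x"
  proof (induction n rule: int_induct[where k=0])
    case base
    then show ?case by (simp add: P_def)
  next
    case (step1 i)
    then show ?case using Pup PG xG by (metis add.assoc)
  next
    case (step2 i)
    then show ?case using Pdown PG xG by (metis add_diff_eq)
  qed
  show "mul (mul x (zpow G mul e s m)) (zpow G mul e s n) = mul x (zpow G mul e s (m + n))"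
    using zp[OF xG] zp[OF PG[OF xG]] main by simp
qed

end
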